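(* Let $c\in(0,1)$, let $h>0$ be real, let $1\le l<n$ be integers and let $\pi$ be any collaborating cryptogenography protocol. Then \[ \mathrm{Succ}(h,l,n,\pi)\le 1-\frac{ch+l\log(1-c)+lc\log e-c}{h}. \]
   Context: All logarithms are base $2$; $e$ is the base of the natural logarithm. Collaborating cryptogenography protocol: there are $n$ players $\mathrm{plr}_1,\dots,\mathrm{plr}_n$; a secret $X$ (finitely supported) and indicators $L_1,\dots,L_n\in\{0,1\}$ ($L_i=1$ means $\mathrm{plr}_i$ knows $X$) have a joint distribution. A protocol $\pi$ specifies, for every possible partial transcript $t^k=(t_1,\dots,t_k)$ (the tuple of the first $k$ messages): whether communication stops; if not, which player $\mathrm{plr}_i$ sends the next message; and probability distributions $p_?$ and $(p_x)_{x}$ on a finite message set (depending on $t^k$). $\mathrm{plr}_i$ draws the next message, with fresh independent randomness, from $p_?$ if $L_i=0$ and from $p_x$ if $L_i=1$ and $X=x$. There is a number $\mathrm{length}(\pi)$ such that the protocol always stops after at most that many messages. $T$ denotes the random full transcript. The game $\mathrm{Succ}$: for real $h\ge0$ and integers $1\le l<n$, let $X$ be uniform on $\{1,\dots,2^{\lceil h\rceil}\}$ and, independently, let $(L_1,\dots,L_n)$ be uniform over the $0/1$-vectors with exactly $l$ ones. The players run a collaborating cryptogenography protocol $\pi$ with transcript $T$. Then Frank outputs a guess $F=f(T)$ of $X$, and Eve, seeing $T$ and $F$, outputs a player index $E=g(T,F)$. The players (and Frank) win if $F=X$ and $L_E=0$; otherwise Eve wins. $\mathrm{Succ}(h,l,n,\pi)=\max_f\min_g\Pr(F=X\text{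 and }L_E=0)$. *)

theory Defs
  imports "HOL-Probability.Probability"
begin

text \<open>For a partial transcript t (list of messages so far), \<open>\<pi> t = None\<close> means communication stops;
  \<open>\<pi> t = Some (i, p0, px)\<close> means player i sends the next message, drawn from p0 if
  player i does not know the secret, and from \<open>px x\<close> if he knows it and the secret is x.\<close>

type_synonym 'm protocol = "'m list \<Rightarrow> (nat \<times> 'm pmf \<times> (nat \<Rightarrow> 'm pmf)) option"

definition valid_protocol :: "nat \<Rightarrow> nat \<Rightarrow> 'm protocol \<Rightarrow> bool" where
  "valid_protocol n N \<pi> \<longleftrightarrow>
     (\<forall>t i p0 px. \<pi> t = Some (i, p0, px) \<longrightarrow>
        i \<in> {1..n} \<and> finite (set_pmf p0) \<and> (\<forall>x. finite (set_pmf (px x)))) \<and>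
     (\<forall>t. N \<le> length t \<longrightarrow> \<pi> t = None)"

text \<open>Distribution of the full transcript when the secret is x and K is the set of
  players who know it (L_i = 1 iff i \<in> K), starting from partial transcript t, with fuel k.\<close>
fun run :: "'m protocol \<Rightarrow> nat \<Rightarrow> nat \<Rightarrow> nat set \<Rightarrow> 'm list \<Rightarrow> 'm list pmf" where
  "run \<pi> 0 x K t = return_pmf t"
| "run \<pi> (Suc k) x K t =
     (case \<pi> t of
        None \<Rightarrow> return_pmf t
      | Some (i, p0, px) \<Rightarrow>
          bind_pmf (if i \<in> K then px x else p0) (\<lambda>m. run \<pi> k x K (t @ [m])))"

text \<open>Joint distribution of (X, set of knowing players, T) in the game Succ.\<close>
definition succ_game :: "real \<Rightarrow> nat \<Rightarrow> nat \<Rightarrow> 'm protocol \<Rightarrow> nat \<Rightarrow> (nat \<times> nat set \<times> 'm list) pmf" where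
  "succ_game h l n \<pi> N =
     bind_pmf (pmf_of_set {1..2 ^ nat \<lceil>h\<rceil>}) (\<lambda>x.
     bind_pmf (pmf_of_set {K. K \<subseteq> {1..n} \<and> card K = l}) (\<lambda>K.
     bind_pmf (run \<pi> N x K []) (\<lambda>T. return_pmf (x, K, T))))"

text \<open>Winning probability of the players for Frank's strategy f and Eve's strategy g.\<close>
definition succ_win :: "real \<Rightarrow> nat \<Rightarrow> nat \<Rightarrow> 'm protocol \<Rightarrow> nat \<Rightarrow>
    ('m list \<Rightarrow> nat) \<Rightarrow> ('m list \<Rightarrow> nat \<Rightarrow> nat) \<Rightarrow> real" where
  "succ_win h l n \<pi> N f g =
     measure_pmf.prob (succ_game h l n \<pi> N)
       {(x, K, T). f T = x \<and> g T (f T) \<notin> K}"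

definition Succ :: "real \<Rightarrow> nat \<Rightarrow> nat \<Rightarrow> 'm protocol \<Rightarrow> nat \<Rightarrow> real" where
  "Succ h l n \<pi> N =
     (SUP f. INF g \<in> {g. \<forall>T y. g T y \<in> {1..n}}. succ_win h l n \<pi> N f g)"

end

theory Submission
  imports Defs
begin


definition esym :: "nat set \<Rightarrow> (nat \<Rightarrow> real) \<Rightarrow> nat \<Rightarrow> real" where
  "esym J r k = (\<Sum>K\<in>{K. K \<subseteq> J \<and> card K = k}. \<Prod>i\<in>K. r i)"

lemma esym_0: "finite J \<Longrightarrow> esym J r 0 = 1"
proof -
  assume "finite J"
  then have "{K. K \<subseteq> J \<and> card K = 0} = {{}}" by (auto, metis card_0_eq finite_subset empty_iff)
  then show ?thesis by (simp add: esym_def)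
qed

lemma esym_nonneg: "(\<And>i. i \<in> J \<Longrightarrow> 0 \<le> r i) \<Longrightarrow> 0 \<le> esym J r k"
  unfolding esym_def by (intro sum_nonneg prod_nonneg) auto

lemma esym_ins:
  assumes "finite J" "j \<in> J"
  shows "r j * esym (J - {j}) r k = (\<Sum>K\<in>{K. K \<subseteq> J \<and> card K = Suc k \<and> j \<in> K}. \<Prod>i\<in>K. r i)"
proof -
  have "r j * esym (J - {j}) r k = (\<Sum>K\<in>{K. K \<subseteq> J - {j} \<and> card K = k}. \<Prod>i\<in>insert j K. r i)"
    unfolding esym_def sum_distrib_left
    apply (rule sum.cong[OF refl])
    apply (subst prod.insert)
    using assms by (auto intro: finite_subset)
  also have "\<dots> = (\<Sum>K\<in>{K. K \<subseteq> J \<and> card K = Suc k \<and> j \<in> K}. \<Prod>i\<in>K. r i)"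
  proof (rule sum.reindex_bij_betw)
    show "bij_betw (insert j) {K. K \<subseteq> J - {j} \<and> card K = k} {K. K \<subseteq> J \<and> card K = Suc k \<and> j \<in> K}"
    proof (rule bij_betw_byWitness[where f'="\<lambda>K. K - {j}"])
      show "\<forall>a\<in>{K. K \<subseteq> J - {j} \<and> card K = k}. insert j a - {j} = a" by auto
      show "\<forall>a'\<in>{K. K \<subseteq> J \<and> card K = Suc k \<and> j \<in> K}. insert j (a' - {j}) = a'" by auto
      show "insert j ` {K. K \<subseteq> J - {j} \<and> card K = k} \<subseteq> {K. K \<subseteq> J \<and> card K = Suc k \<and> j \<in> K}"
      proof (rule image_subsetI)
        fix K assume K: "K \<in> {K. K \<subseteq> J - {j} \<and> card K = k}"
        then have "finite K" "j \<notin> K" using assms finite_subset by auto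
        then show "insert j K \<in> {K. K \<subseteq> J \<and> card K = Suc k \<and> j \<in> K}" using K assms by auto
      qed
      show "(\<lambda>K. K - {j}) ` {K. K \<subseteq> J \<and> card K = Suc k \<and> j \<in> K} \<subseteq> {K. K \<subseteq> J - {j} \<and> card K = k}"
        using assms by (auto dest: finite_subset)
    qed
  qed
  finally show ?thesis .
qed

lemma esym_split:
  assumes "finite J" "j \<in> J"
  shows "esym J r (Suc k) = esym (J - {j}) r (Suc k) + r j * esym (J - {j}) r k"
proof -
  have fin: "finite {K. K \<subseteq> J \<and> card K = Suc k}" using assms by auto
  have "esym J r (Suc k) = (\<Sum>K\<in>{K. K \<subseteq> J \<and> card K = Suc k} \<inter> {K. j \<notin> K}. \<Prod>i\<in>K. r i)
      + (\<Sum>K\<in>{K. K \<subseteq> J \<and> card K = Suc k} - {K. j \<notin> K}. \<Prod>i\<in>K. r i)"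
    unfolding esym_def by (rule sum.Int_Diff[OF fin])
  also have "{K. K \<subseteq> J \<and> card K = Suc k} \<inter> {K. j \<notin> K} = {K. K \<subseteq> J - {j} \<and> card K = Suc k}" by auto
  also have "{K. K \<subseteq> J \<and> card K = Suc k} - {K. j \<notin> K} = {K. K \<subseteq> J \<and> card K = Suc k \<and> j \<in> K}" by auto
  finally show ?thesis using esym_ins[OF assms, of r k] by (simp add: esym_def)
qed

lemma esym_double:
  assumes "finite J"
  shows "real (Suc k) * esym J r (Suc k) = (\<Sum>j\<in>J. r j * esym (J - {j}) r k)"
proof -
  let ?S = "{K. K \<subseteq> J \<and> card K = Suc k}"
  have fin: "finite ?S" using assms by auto
  have "(\<Sum>j\<in>J. r j * esym (J - {j}) r k) = (\<Sum>j\<in>J. \<Sum>K\<in>{K \<in> ?S. j \<in> K}. \<Prod>i\<in>K. r i)"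
    by (rule sum.cong[OF refl]) (subst esym_ins[OF assms], auto intro: sum.cong)
  also have "\<dots> = (\<Sum>K\<in>?S. \<Sum>j\<in>{j\<in>J. j \<in> K}. \<Prod>i\<in>K. r i)"
    by (rule sum.swap_restrict[OF assms fin])
  also have "\<dots> = (\<Sum>K\<in>?S. real (Suc k) * (\<Prod>i\<in>K. r i))"
  proof (rule sum.cong[OF refl])
    fix K assume "K \<in> ?S"
    then have "{j\<in>J. j \<in> K} = K" "card K = Suc k" by auto
    then show "(\<Sum>j\<in>{j\<in>J. j \<in> K}. \<Prod>i\<in>K. r i) = real (Suc k) * (\<Prod>i\<in>K. r i)" by simp
  qed
  finally show ?thesis by (simp add: esym_def sum_distrib_left)
qed

lemma esym_mono_set:
  assumes "finite J" "J' \<subseteq> J" "\<And>i. i \<in> J \<Longrightarrow> 0 \<le> r i"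
  shows "esym J' r k \<le> esym J r k"
  unfolding esym_def
  apply (rule sum_mono2)
  using assms by (auto intro!: prod_nonneg)

lemma esym_1: "finite J \<Longrightarrow> esym J r (Suc 0) = sum r J"
proof -
  assume f: "finite J"
  have "real (Suc 0) * esym J r (Suc 0) = (\<Sum>j\<in>J. r j * esym (J - {j}) r 0)" by (rule esym_double[OF f])
  then show ?thesis using f by (simp add: esym_0)
qed

lemma esym_bound:
  assumes "finite J" "\<And>i. i \<in> J \<Longrightarrow> 0 \<le> r i"
  shows "esym J r k \<le> (sum r J) ^ k / fact k"
proof (induction k)
  case 0 then show ?case using assms by (simp add: esym_0)
next
  case (Suc k)
  have "real (Suc k) * esym J r (Suc k) = (\<Sum>j\<in>J. r j * esym (J - {j}) r k)" by (rule esym_double[OF assms(1)])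
  also have "\<dots> \<le> (\<Sum>j\<in>J. r j * esym J r k)"
    by (intro sum_mono mult_left_mono esym_mono_set) (use assms in auto)
  also have "\<dots> = sum r J * esym J r k" by (simp add: sum_distrib_right)
  also have "\<dots> \<le> sum r J * ((sum r J) ^ k / fact k)"
    by (intro mult_left_mono Suc.IH sum_nonneg) (use assms in auto)
  finally have "real (Suc k) * esym J r (Suc k) \<le> (sum r J) ^ Suc k / fact k" by simp
  then have "esym J r (Suc k) \<le> ((sum r J) ^ Suc k / fact k) / real (Suc k)"
    by (simp add: pos_le_divide_eq mult_ac)
  also have "\<dots> = (sum r J) ^ Suc k / fact (Suc k)"
    by (simp add: fact_Suc divide_divide_eq_left mult.commute)
  finally show ?case .
qed

lemma esym_step_i:
  assumes "finite J" "\<And>i. i \<in> J \<Longrightarrow> 0 \<le> r i" "\<And>i. i \<in> J \<Longrightarrow> r i \<le> m"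
  shows "real (Suc (Suc l)) * esym J r (Suc (Suc l)) \<ge> esym J r (Suc l) * (sum r J - real (Suc l) * m)"
proof -
  have "real (Suc (Suc l)) * esym J r (Suc (Suc l)) = (\<Sum>j\<in>J. r j * esym (J - {j}) r (Suc l))"
    by (rule esym_double[OF assms(1)])
  also have "\<dots> = (\<Sum>j\<in>J. r j * esym J r (Suc l) - r j * (r j * esym (J - {j}) r l))"
    by (rule sum.cong[OF refl]) (subst esym_split[OF assms(1)], auto simp: algebra_simps)
  also have "\<dots> = sum r J * esym J r (Suc l) - (\<Sum>j\<in>J. r j * (r j * esym (J - {j}) r l))"
    by (simp add: sum_subtractf sum_distrib_right)
  also have "\<dots> \<ge> sum r J * esym J r (Suc l) - (\<Sum>j\<in>J. m * (r j * esym (J - {j}) r l))"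
    apply (rule diff_left_mono, rule sum_mono, rule mult_right_mono)
    using assms by (auto intro!: mult_nonneg_nonneg esym_nonneg)
  also have "(\<Sum>j\<in>J. m * (r j * esym (J - {j}) r l)) = m * (real (Suc l) * esym J r (Suc l))"
    by (simp only: esym_double[OF assms(1)] sum_distrib_left)
  finally show ?thesis by (simp add: algebra_simps)
qed

lemma frac_le_helper: "(0::real) < b \<Longrightarrow> 0 < d \<Longrightarrow> a * d \<le> c * b \<Longrightarrow> a / b \<le> c / d"
  by (simp add: divide_le_eq le_divide_eq mult.commute mult.left_commute)

lemma pow_fact_binom: "l \<le> n \<Longrightarrow> (n - l) ^ l \<le> fact l * (n choose l)"
proof (induction l)
  case 0 then show ?case by simp
next
  case (Suc l)
  then have IH: "(n - l) ^ l \<le> fact l * (n choose l)" by simp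
  have eq: "Suc l * (n choose Suc l) = (n - l) * (n choose l)"
    using binomial_absorption[of l n] binomial_absorb_comp[of n l] by simp
  have "(n - Suc l) ^ Suc l \<le> (n - l) * (n - l) ^ l"
    using power_mono[of "n - Suc l" "n - l" l] by (simp add: mult_le_mono)
  also have "\<dots> \<le> (n - l) * (fact l * (n choose l))" using IH by simp
  also have "\<dots> = fact l * (Suc l * (n choose Suc l))" using eq by simp
  also have "\<dots> = fact (Suc l) * (n choose Suc l)" by (simp add: fact_Suc algebra_simps)
  finally show ?case .
qed

lemma pointwise_ineq:
  assumes fin: "finite I" and g: "g \<in> I" and n: "card I = n" and l: "1 \<le> l" "l < n"
    and nn: "\<And>i. i \<in> I \<Longrightarrow> 0 \<le> r i" and mx: "\<And>i. i \<in> I \<Longrightarrow> r i \<le> r g"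
  shows "(esym (I - {g}) r l / real (n choose l)) ^ (Suc l) \<le> (esym I r (Suc l) / real (n choose (Suc l))) ^ l"
proof -
  obtain l' where l': "l = Suc l'" using l by (cases l) auto
  define y where "y = I - {g}"
  define E where "E = esym y r l"
  define D where "D = esym I r (Suc l)"
  define S where "S = sum r I"
  define Sy where "Sy = sum r y"
  define m where "m = r g"
  have finy: "finite y" using fin by (simp add: y_def)
  have nny: "\<And>i. i \<in> y \<Longrightarrow> 0 \<le> r i" using nn by (auto simp: y_def)
  have mxy: "\<And>i. i \<in> y \<Longrightarrow> r i \<le> m" using mx by (auto simp: y_def m_def)
  have E0: "0 \<le> E" unfolding E_def by (rule esym_nonneg[OF nny])
  have m0: "0 \<le> m" using nn g by (simp add: m_def)
  have Sy0: "0 \<le> Sy" unfolding Sy_def by (rule sum_nonneg) (use nny in auto)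
  have SS: "S = Sy + m" unfolding S_def Sy_def m_def y_def using fin g by (simp add: sum.remove)
  have a: "D = esym y r (Suc l) + m * E"
    unfolding D_def E_def y_def m_def by (rule esym_split[OF fin g])
  have b: "real (Suc l) * esym y r (Suc l) \<ge> E * (Sy - real l * m)"
    using esym_step_i[OF finy nny mxy, where l=l'] unfolding E_def Sy_def l' by simp
  have c: "real (Suc l) * D \<ge> E * S"
  proof -
    have "real (Suc l) * D = real (Suc l) * esym y r (Suc l) + real (Suc l) * m * E" using a by (simp add: algebra_simps)
    also have "\<dots> \<ge> E * (Sy - real l * m) + real (Suc l) * m * E" using b by simp
    finally show ?thesis using SS by (simp add: algebra_simps)
  qed
  have d: "E \<le> S ^ l / fact l"
  proof -
    have "E \<le> Sy ^ l / fact l" unfolding E_def Sy_def by (rule esym_bound[OF finy nny])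
    also have "\<dots> \<le> S ^ l / fact l" using SS m0 Sy0 by (intro divide_right_mono power_mono) auto
    finally show ?thesis .
  qed
  have S0: "0 \<le> S" using SS m0 Sy0 by simp
  have D0: "0 \<le> D" unfolding D_def by (rule esym_nonneg) (use nn in auto)
  have e1: "(E * S) ^ l \<le> (real (Suc l) * D) ^ l"
    using c E0 S0 by (intro power_mono) auto
  have e2: "E ^ l * (fact l * E) \<le> (E * S) ^ l"
  proof -
    have "fact l * E \<le> S ^ l" using d by (simp add: field_simps)
    then have "E ^ l * (fact l * E) \<le> E ^ l * S ^ l" using E0 by (intro mult_left_mono) auto
    then show ?thesis by (simp add: power_mult_distrib)
  qed
  define C where "C = real (n choose l)"
  define C' where "C' = real (n choose Suc l)"
  have C0: "0 < C" unfolding C_def using l by simp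
  have eqC: "real (Suc l) * C' = real (n - l) * C"
  proof -
    have "Suc l * (n choose Suc l) = (n - l) * (n choose l)"
      using binomial_absorption[of l n] binomial_absorb_comp[of n l] by simp
    then show ?thesis unfolding C_def C'_def by (metis of_nat_mult)
  qed
  have pf: "real (n - l) ^ l \<le> fact l * C"
  proof -
    have "(n - l) ^ l \<le> fact l * (n choose l)" using l by (intro pow_fact_binom) auto
    then have "real ((n - l) ^ l) \<le> real (fact l * (n choose l))" by (simp only: of_nat_le_iff)
    then show ?thesis unfolding C_def by simp
  qed
  have nl0: "0 < real (n - l)" using l by simp
  have C'0: "0 < C'" unfolding C'_def using l by simp
  have key: "E ^ Suc l * fact l \<le> (real (Suc l) * D) ^ l" using e1 e2 by (simp add: algebra_simps)
  have "(E / C) ^ Suc l = E ^ Suc l / C ^ Suc l" by (simp add: power_divide)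
  also have "\<dots> \<le> E ^ Suc l * fact l / (real (n - l) ^ l * C ^ l)"
  proof -
    have "E ^ Suc l * (real (n - l) ^ l * C ^ l) \<le> E ^ Suc l * (fact l * C * C ^ l)"
      using pf E0 C0 by (intro mult_left_mono mult_right_mono) auto
    then show ?thesis using C0 nl0 by (intro frac_le_helper) (auto simp: mult_ac)
  qed
  also have "\<dots> = E ^ Suc l * fact l / (real (Suc l) * C') ^ l"
    using eqC by (simp add: power_mult_distrib)
  also have "\<dots> \<le> (real (Suc l) * D) ^ l / (real (Suc l) * C') ^ l"
    using key C'0 by (intro divide_right_mono) auto
  also have "\<dots> = (D / C') ^ l" unfolding power_mult_distrib power_divide
    by (rule mult_divide_mult_cancel_left) simp
  finally show ?thesis unfolding C_def C'_def D_def E_def y_def .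
qed



lemma frac_le_helper2: "(0::real) < b \<Longrightarrow> 0 < d \<Longrightarrow> a * d \<le> c * b \<Longrightarrow> a / b \<le> c / d"
  by (simp add: divide_le_eq le_divide_eq mult.commute mult.left_commute)

lemma ln_lower: assumes "(0::real) \<le> x" shows "2 * x / (2 + x) \<le> ln (1 + x)"
proof -
  let ?f = "\<lambda>t::real. ln (1 + t) - 2 * t / (2 + t)"
  have "?f 0 \<le> ?f x"
  proof (rule DERIV_nonneg_imp_increasing_open[OF assms])
    fix t :: real assume t: "0 < t" "t < x"
    have d: "(?f has_real_derivative (1 / (1 + t) - (2 * (2 + t) - 2 * t) / (2 + t)^2)) (at t)"
      using t by (auto intro!: derivative_eq_intros simp: power2_eq_square)
    have "(2 * (2 + t) - 2 * t) / (2 + t)^2 \<le> 1 / (1 + t)"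
    proof (rule frac_le_helper2)
      show "0 < (2 + t)^2" using t by simp
      show "0 < 1 + t" using t by simp
      have "0 \<le> t * t" by simp
      then show "(2 * (2 + t) - 2 * t) * (1 + t) \<le> 1 * (2 + t)\<^sup>2" by (simp add: power2_eq_square algebra_simps)
    qed
    then show "\<exists>y. (?f has_real_derivative y) (at t) \<and> 0 \<le> y" using d by auto
  next
    show "continuous_on {0..x} ?f"
      by (intro continuous_intros) (auto simp: add_pos_nonneg)
  qed
  then show ?thesis by simp
qed

lemma analytic:
  fixes c h :: real and l :: nat
  assumes c: "0 < c" "c < 1" and h: "0 < h" and l: "1 \<le> l"
  shows "2 powr (- h / real (Suc l)) \<le>
    1 - (c * h + real l * log 2 (1 - c) + real l * c * log 2 (exp 1) - c) / h"
proof -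
  define L where "L = ln (2::real)"
  define u where "u = 1 - c"
  define b where "b = h * L / real l"
  define a where "a = h * L / real (Suc l)"
  have L0: "0 < L" unfolding L_def by simp
  have u0: "0 < u" "u < 1" using c by (auto simp: u_def)
  have l0: "0 < real l" using l by simp
  have b0: "0 < b" unfolding b_def using h L0 l0 by simp
  have hb: "h = b * real l / L" unfolding b_def using L0 l0 by simp
  have ab: "b / 2 \<le> a"
  proof -
    have "real (Suc l) \<le> 2 * real l" using l by simp
    then have "h * L / (2 * real l) \<le> h * L / real (Suc l)"
      using h L0 by (intro divide_left_mono) auto
    then show ?thesis unfolding a_def b_def by simp
  qed
  have lg: "log 2 (1 - c) = ln u / L" "log 2 (exp 1) = 1 / L" unfolding L_def u_def log_def by simp_all
  have eq1: "h * (1 - (c * h + real l * log 2 (1 - c) + real l * c * log 2 (exp 1) - c) / h)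
      = c + (real l / L) * ((1 + b) * u - 1 - ln u)"
  proof -
    have hbl: "real l / L * b = h" unfolding b_def using L0 l0 by simp
    have "h * (1 - (c * h + real l * log 2 (1 - c) + real l * c * log 2 (exp 1) - c) / h)
        = c + h * u + (real l / L) * (u - 1 - ln u)"
      unfolding lg using h L0 l0 by (simp add: u_def field_simps)
    also have "\<dots> = c + (real l / L) * ((1 + b) * u - 1 - ln u)"
      using hbl[symmetric] by (simp add: algebra_simps)
    finally show ?thesis .
  qed
  have w: "ln ((1 + b) * u) \<le> (1 + b) * u - 1" using b0 u0 by (intro ln_le_minus_one) simp
  have "ln ((1 + b) * u) = ln (1 + b) + ln u" using b0 u0 by (simp add: ln_mult)
  with w have s1: "ln (1 + b) \<le> (1 + b) * u - 1 - ln u" by simp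
  have s2: "b * exp (- a) \<le> ln (1 + b)"
  proof -
    have "exp a \<ge> 1 + a" by (rule exp_ge_add_one_self)
    then have "exp a \<ge> 1 + b / 2" using ab by linarith
    then have "exp (-a) \<le> 1 / (1 + b / 2)" using b0 by (simp add: exp_minus field_simps)
    then have "b * exp (-a) \<le> b * (1 / (1 + b / 2))" using b0 by (intro mult_left_mono) auto
    also have "\<dots> = 2 * b / (2 + b)" using b0 by (simp add: field_simps)
    also have "\<dots> \<le> ln (1 + b)" using b0 by (intro ln_lower) simp
    finally show ?thesis .
  qed
  have pw: "2 powr (- h / real (Suc l)) = exp (- a)"
    unfolding powr_def a_def L_def by simp
  have "h * exp (- a) = (real l / L) * (b * exp (-a))" using hb by simp
  also have "\<dots> \<le> (real l / L) * ln (1 + b)" using s2 L0 l0 by (intro mult_left_mono) auto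
  also have "\<dots> \<le> (real l / L) * ((1 + b) * u - 1 - ln u)" using s1 L0 l0 by (intro mult_left_mono) auto
  also have "\<dots> \<le> h * (1 - (c * h + real l * log 2 (1 - c) + real l * c * log 2 (exp 1) - c) / h)"
    using eq1 c by simp
  finally show ?thesis using h pw by simp
qed



lemma amgm:
  fixes u v w :: real and l :: nat
  assumes "0 \<le> u" "0 \<le> v" "0 \<le> w" "1 \<le> l" and le: "w ^ Suc l \<le> u ^ l * v"
  shows "w \<le> (real l * u + v) / real (Suc l)"
proof (cases "w = 0")
  case True then show ?thesis using assms by simp
next
  case False
  then have w0: "0 < w" using assms by simp
  then have "0 < u ^ l * v" using le by (meson zero_less_power order_less_le_trans)
  then have "u \<noteq> 0" "v \<noteq> 0" using assms(4) by (auto simp: power_0_left)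
  then have u0: "0 < u" and v0: "0 < v" using assms by auto
  have "ln (w ^ Suc l) \<le> ln (u ^ l * v)" using le w0 by (intro ln_mono) auto
  then have lnle: "real (Suc l) * ln w \<le> real l * ln u + ln v" using w0 u0 v0 by (simp add: ln_mult ln_realpow algebra_simps)
  define t where "t = 1 / real (Suc l)"
  have t01: "0 \<le> t" "t \<le> 1" unfolding t_def by auto
  have "ln w \<le> (1 - t) * ln u + t * ln v"
  proof -
    have "ln w = (real (Suc l) * ln w) / real (Suc l)" by simp
    also have "\<dots> \<le> (real l * ln u + ln v) / real (Suc l)" using lnle by (intro divide_right_mono) auto
    also have "\<dots> = (1 - t) * ln u + t * ln v"
    proof -
      have e: "1 - t = real l / real (Suc l)" unfolding t_def by (simp add: field_simps)
      have "(real l * ln u + ln v) / real (Suc l) = real l / real (Suc l) * ln u + t * ln v"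
        unfolding t_def by (simp add: add_divide_distrib)
      then show ?thesis by (simp only: e)
    qed
    finally show ?thesis .
  qed
  then have "w \<le> exp ((1 - t) * ln u + t * ln v)" using w0 by (metis exp_le_cancel_iff exp_ln)
  also have "\<dots> \<le> (1 - t) * exp (ln u) + t * exp (ln v)"
    using convex_onD[OF exp_convex t01] by simp
  also have "\<dots> = (real l * u + v) / real (Suc l)"
  proof -
    have e: "1 - t = real l / real (Suc l)" unfolding t_def by (simp add: field_simps)
    have "(real l * u + v) / real (Suc l) = real l / real (Suc l) * u + t * v"
      unfolding t_def by (simp add: add_divide_distrib)
    then show ?thesis using u0 v0 by (simp only: e exp_ln)
  qed
  finally show ?thesis .
qed

lemma pointwise_AB:
  fixes a b :: "nat \<Rightarrow> real" and I :: "nat set"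
  assumes fin: "finite I" and n: "card I = n" and l: "1 \<le> l" "l < n"
    and nn: "\<And>i. i \<in> I \<Longrightarrow> 0 \<le> a i" "\<And>i. i \<in> I \<Longrightarrow> 0 \<le> b i" and g: "g \<in> I"
    and g0: "(\<exists>i\<in>I. b i = 0) \<Longrightarrow> b g = 0"
    and gmax: "(\<forall>i\<in>I. 0 < b i) \<Longrightarrow> (\<forall>j\<in>I. a j / b j \<le> a g / b g)"
  shows "((\<Sum>K\<in>{K. K \<subseteq> I \<and> card K = l \<and> g \<notin> K}. \<Prod>i\<in>I. if i \<in> K then a i else b i) / real (n choose l)) ^ Suc l
     \<le> ((\<Sum>K\<in>{K. K \<subseteq> I \<and> card K = Suc l}. \<Prod>i\<in>I. if i \<in> K then a i else b i) / real (n choose Suc l)) ^ l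
        * (\<Prod>i\<in>I. if i \<in> {} then a i else b i)"
proof (cases "\<exists>i\<in>I. b i = 0")
  case True
  then have bg: "b g = 0" by (rule g0)
  have "(\<Sum>K\<in>{K. K \<subseteq> I \<and> card K = l \<and> g \<notin> K}. \<Prod>i\<in>I. if i \<in> K then a i else b i) = 0"
  proof (rule sum.neutral, rule ballI)
    fix K assume "K \<in> {K. K \<subseteq> I \<and> card K = l \<and> g \<notin> K}"
    then have "g \<notin> K" by simp
    then have "\<exists>i\<in>I. (if i \<in> K then a i else b i) = 0" using g bg by auto
    then show "(\<Prod>i\<in>I. if i \<in> K then a i else b i) = 0" using fin by (rule prod_zero[rotated])
  qed
  moreover have "0 \<le> (\<Sum>K\<in>{K. K \<subseteq> I \<and> card K = Suc l}. \<Prod>i\<in>I. if i \<in> K then a i else b i)"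
    using nn by (intro sum_nonneg prod_nonneg) auto
  moreover have "0 \<le> (\<Prod>i\<in>I. if i \<in> {} then a i else b i)" using nn by (intro prod_nonneg) auto
  ultimately show ?thesis using l by simp
next
  case False
  then have bp: "\<And>i. i \<in> I \<Longrightarrow> 0 < b i" using nn(2) by (metis less_eq_real_def)
  define r where "r i = a i / b i" for i
  define B where "B = (\<Prod>i\<in>I. b i)"
  have B0: "0 < B" unfolding B_def using bp by (simp add: prod_pos)
  have rnn: "\<And>i. i \<in> I \<Longrightarrow> 0 \<le> r i" unfolding r_def using nn bp by simp
  have rmx: "\<And>i. i \<in> I \<Longrightarrow> r i \<le> r g" unfolding r_def using gmax bp by auto
  have PK: "(\<Prod>i\<in>I. if i \<in> K then a i else b i) = B * (\<Prod>i\<in>K. r i)" if "K \<subseteq> I" for K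
  proof -
    have "(\<Prod>i\<in>I. if i \<in> K then a i else b i) = (\<Prod>i\<in>I. b i * (if i \<in> K then r i else 1))"
    proof (rule prod.cong[OF refl])
      fix i assume "i \<in> I"
      then have "b i > 0" by (rule bp)
      then show "(if i \<in> K then a i else b i) = b i * (if i \<in> K then r i else 1)" by (simp add: r_def)
    qed
    also have "\<dots> = B * (\<Prod>i\<in>I. if i \<in> K then r i else 1)" by (simp add: prod.distrib B_def)
    also have "(\<Prod>i\<in>I. if i \<in> K then r i else 1) = (\<Prod>i\<in>I \<inter> K. r i)"
      by (simp add: prod.inter_restrict[OF fin])
    also have "I \<inter> K = K" using that by auto
    finally show ?thesis .
  qed
  have set1: "{K. K \<subseteq> I \<and> card K = l \<and> g \<notin> K} = {K. K \<subseteq> I - {g} \<and> card K = l}" by auto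
  have s1: "(\<Sum>K\<in>{K. K \<subseteq> I \<and> card K = l \<and> g \<notin> K}. \<Prod>i\<in>I. if i \<in> K then a i else b i) = B * esym (I - {g}) r l"
    unfolding esym_def set1 sum_distrib_left by (rule sum.cong[OF refl]) (auto intro!: PK)
  have s2: "(\<Sum>K\<in>{K. K \<subseteq> I \<and> card K = Suc l}. \<Prod>i\<in>I. if i \<in> K then a i else b i) = B * esym I r (Suc l)"
    unfolding esym_def sum_distrib_left by (rule sum.cong[OF refl]) (auto intro!: PK)
  have s3: "(\<Prod>i\<in>I. if i \<in> {} then a i else b i) = B" unfolding B_def by simp
  have pw: "(esym (I - {g}) r l / real (n choose l)) ^ Suc l \<le> (esym I r (Suc l) / real (n choose Suc l)) ^ l"
    by (rule pointwise_ineq[OF fin g n l(1) l(2)]) (use rnn rmx in auto)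
  have "(B * esym (I - {g}) r l / real (n choose l)) ^ Suc l = B ^ Suc l * (esym (I - {g}) r l / real (n choose l)) ^ Suc l"
    by (simp add: power_mult_distrib[symmetric])
  also have "\<dots> \<le> B ^ Suc l * (esym I r (Suc l) / real (n choose Suc l)) ^ l"
    using pw B0 by (intro mult_left_mono) auto
  also have "\<dots> = (B * esym I r (Suc l) / real (n choose Suc l)) ^ l * B"
    by (simp add: power_mult_distrib[symmetric] mult_ac)
  finally show ?thesis unfolding s1 s2 s3 .
qed



definition okt :: "'m protocol \<Rightarrow> nat \<Rightarrow> 'm list \<Rightarrow> 'm list \<Rightarrow> bool" where
  "okt \<pi> k t0 t \<longleftrightarrow> take (length t0) t = t0 \<and> length t0 \<le> length t \<and>
     (\<forall>j. length t0 \<le> j \<and> j < length t \<longrightarrow> \<pi> (take j t) \<noteq> None) \<and>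
     length t \<le> length t0 + k \<and> (length t = length t0 + k \<or> \<pi> t = None)"

definition stepp :: "'m protocol \<Rightarrow> nat \<Rightarrow> nat set \<Rightarrow> 'm list \<Rightarrow> nat \<Rightarrow> real" where
  "stepp \<pi> x K t j = (case \<pi> (take j t) of None \<Rightarrow> 1
     | Some (i, p0, px) \<Rightarrow> pmf (if i \<in> K then px x else p0) (t ! j))"

lemma okt_0: "okt \<pi> 0 t0 t \<longleftrightarrow> t = t0"
  unfolding okt_def by (auto simp: take_all)

lemma okt_None: "\<pi> t0 = None \<Longrightarrow> okt \<pi> (Suc k) t0 t \<longleftrightarrow> t = t0"
proof
  assume N: "\<pi> t0 = None" and o: "okt \<pi> (Suc k) t0 t"
  show "t = t0"
  proof (rule ccontr)
    assume "t \<noteq> t0"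
    with o have "length t0 < length t" unfolding okt_def by (metis le_neq_implies_less take_all)
    with o have "\<pi> (take (length t0) t) \<noteq> None" unfolding okt_def by auto
    with o N show False unfolding okt_def by simp
  qed
next
  assume "\<pi> t0 = None" "t = t0"
  then show "okt \<pi> (Suc k) t0 t" unfolding okt_def by auto
qed

lemma okt_Suc:
  assumes "\<pi> t0 \<noteq> None"
  shows "okt \<pi> (Suc k) t0 t \<longleftrightarrow> length t0 < length t \<and> okt \<pi> k (t0 @ [t ! length t0]) t"
proof
  assume o: "okt \<pi> (Suc k) t0 t"
  have lt: "length t0 < length t"
  proof (rule ccontr)
    assume "\<not> length t0 < length t"
    with o have "t = t0" unfolding okt_def by (metis le_neq_implies_less take_all)
    with o assms show False unfolding okt_def by simp
  qed
  have tk: "take (Suc (length t0)) t = t0 @ [t ! length t0]"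
    using o lt unfolding okt_def by (simp add: take_Suc_conv_app_nth)
  show "length t0 < length t \<and> okt \<pi> k (t0 @ [t ! length t0]) t"
    using o lt tk unfolding okt_def by auto
next
  assume a: "length t0 < length t \<and> okt \<pi> k (t0 @ [t ! length t0]) t"
  then have tk: "take (Suc (length t0)) t = t0 @ [t ! length t0]" unfolding okt_def by simp
  then have tk0: "take (length t0) t = t0"
    by (metis append_eq_conv_conj butlast_snoc butlast_take diff_Suc_1 length_take min_absorb2 take_take less_imp_le_nat a
          Suc_leI length_append_singleton le_add1 plus_1_eq_Suc)
  have j: "\<forall>j. length t0 \<le> j \<and> j < length t \<longrightarrow> \<pi> (take j t) \<noteq> None"
  proof (intro allI impI)
    fix j assume j: "length t0 \<le> j \<and> j < length t"
    show "\<pi> (take j t) \<noteq> None"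
    proof (cases "j = length t0")
      case True then show ?thesis using tk0 assms by simp
    next
      case False then show ?thesis using a j unfolding okt_def by auto
    qed
  qed
  show "okt \<pi> (Suc k) t0 t" using a tk0 j unfolding okt_def by auto
qed

lemma integral_single_point:
  fixes f :: "'a \<Rightarrow> real"
  assumes "\<And>m. m \<noteq> m0 \<Longrightarrow> f m = 0"
  shows "(\<integral>m. f m \<partial>measure_pmf d) = f m0 * pmf d m0"
proof -
  have "(\<integral>m. f m \<partial>measure_pmf d) = (\<Sum>a\<in>{m0}. f a * pmf d a)"
    by (rule integral_measure_pmf_real) (use assms in auto)
  then show ?thesis by simp
qed

lemma pmf_run:
  "pmf (run \<pi> k x K t0) t = (if okt \<pi> k t0 t then (\<Prod>j\<in>{length t0..<length t}. stepp \<pi> x K t j) else 0)"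
proof (induction k arbitrary: t0)
  case 0
  then show ?case by (auto simp: okt_0 pmf_return)
next
  case (Suc k)
  show ?case
  proof (cases "\<pi> t0")
    case None
    then show ?thesis by (auto simp: okt_None pmf_return)
  next
    case (Some p)
    obtain i p0 px where p: "p = (i, p0, px)" by (cases p) auto
    define d where "d = (if i \<in> K then px x else p0)"
    have run: "run \<pi> (Suc k) x K t0 = bind_pmf d (\<lambda>m. run \<pi> k x K (t0 @ [m]))"
      using Some p by (simp add: d_def)
    define m0 where "m0 = t ! length t0"
    define Q where "Q = (if okt \<pi> k (t0 @ [m0]) t then (\<Prod>j\<in>{Suc (length t0)..<length t}. stepp \<pi> x K t j) else 0)"
    have "pmf (run \<pi> (Suc k) x K t0) t = (\<integral>m. pmf (run \<pi> k x K (t0 @ [m])) t \<partial>measure_pmf d)"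
      unfolding run pmf_bind ..
    also have "\<dots> = pmf (run \<pi> k x K (t0 @ [m0])) t * pmf d m0"
    proof (rule integral_single_point)
      fix m assume "m \<noteq> m0"
      then have "\<not> okt \<pi> k (t0 @ [m]) t"
        unfolding okt_def m0_def
        by (metis (no_types, lifting) Suc_le_eq length_append_singleton nth_append_length nth_take lessI)
      then show "pmf (run \<pi> k x K (t0 @ [m])) t = 0" using Suc.IH by simp
    qed
    also have "\<dots> = (if okt \<pi> (Suc k) t0 t then (\<Prod>j\<in>{length t0..<length t}. stepp \<pi> x K t j) else 0)"
    proof (cases "okt \<pi> (Suc k) t0 t")
      case True
      then have lt: "length t0 < length t" and o: "okt \<pi> k (t0 @ [m0]) t"
        using okt_Suc[of \<pi> t0 k t] Some by (auto simp: m0_def)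
      have tk0: "take (length t0) t = t0" using True unfolding okt_def by simp
      have st: "stepp \<pi> x K t (length t0) = pmf d m0"
        unfolding stepp_def tk0 using Some p by (simp add: d_def m0_def)
      have "(\<Prod>j\<in>{length t0..<length t}. stepp \<pi> x K t j)
          = stepp \<pi> x K t (length t0) * (\<Prod>j\<in>{Suc (length t0)..<length t}. stepp \<pi> x K t j)"
        using lt by (simp add: prod.atLeast_Suc_lessThan)
      then show ?thesis using True o st Suc.IH[of "t0 @ [m0]"] by simp
    next
      case False
      then have "\<not> okt \<pi> k (t0 @ [m0]) t"
        using okt_Suc[of \<pi> t0 k t] Some unfolding m0_def okt_def by auto
      then show ?thesis using False Suc.IH[of "t0 @ [m0]"] by simp
    qed
    finally show ?thesis .
  qed
qed

lemma finite_run: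
  assumes "valid_protocol n N \<pi>"
  shows "finite (set_pmf (run \<pi> k x K t0))"
proof (induction k arbitrary: t0)
  case 0 then show ?case by simp
next
  case (Suc k)
  show ?case
  proof (cases "\<pi> t0")
    case None then show ?thesis by simp
  next
    case (Some p)
    obtain i p0 px where p: "p = (i, p0, px)" by (cases p) auto
    have "finite (set_pmf p0)" "finite (set_pmf (px x))"
      using assms Some p unfolding valid_protocol_def by blast+
    then show ?thesis using Some p Suc.IH by auto
  qed
qed

definition sndr :: "'m protocol \<Rightarrow> 'm list \<Rightarrow> nat \<Rightarrow> nat" where
  "sndr \<pi> t j = fst (the (\<pi> (take j t)))"

definition aa :: "'m protocol \<Rightarrow> nat \<Rightarrow> nat \<Rightarrow> 'm list \<Rightarrow> real" where
  "aa \<pi> i x t = (\<Prod>j\<in>{j. j < length t \<and> sndr \<pi> t j = i}. pmf (snd (snd (the (\<pi> (take j t)))) x) (t ! j))"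

definition bb :: "'m protocol \<Rightarrow> nat \<Rightarrow> 'm list \<Rightarrow> real" where
  "bb \<pi> i t = (\<Prod>j\<in>{j. j < length t \<and> sndr \<pi> t j = i}. pmf (fst (snd (the (\<pi> (take j t))))) (t ! j))"

lemma aa_nonneg: "0 \<le> aa \<pi> i x t" unfolding aa_def by (intro prod_nonneg) auto
lemma bb_nonneg: "0 \<le> bb \<pi> i t" unfolding bb_def by (intro prod_nonneg) auto

lemma factor:
  assumes v: "valid_protocol n N \<pi>" and o: "okt \<pi> N [] t"
  shows "(\<Prod>j\<in>{0..<length t}. stepp \<pi> x K t j) = (\<Prod>i\<in>{1..n}. if i \<in> K then aa \<pi> i x t else bb \<pi> i t)"
proof -
  have some: "\<And>j. j < length t \<Longrightarrow> \<pi> (take j t) \<noteq> None" using o unfolding okt_def by auto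
  have snd_in: "\<And>j. j < length t \<Longrightarrow> sndr \<pi> t j \<in> {1..n}"
  proof -
    fix j assume "j < length t"
    then obtain p where p: "\<pi> (take j t) = Some p" using some by blast
    obtain i p0 px where "p = (i, p0, px)" by (cases p) auto
    then show "sndr \<pi> t j \<in> {1..n}" using v p unfolding valid_protocol_def sndr_def by auto
  qed
  have st: "stepp \<pi> x K t j = (if sndr \<pi> t j \<in> K then pmf (snd (snd (the (\<pi> (take j t)))) x) (t ! j)
        else pmf (fst (snd (the (\<pi> (take j t))))) (t ! j))" if jl: "j < length t" for j
  proof -
    obtain p where p: "\<pi> (take j t) = Some p" using some[OF jl] by auto
    obtain i p0 px where "p = (i, p0, px)" by (cases p) auto
    then show ?thesis using p unfolding stepp_def sndr_def by simp
  qed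
  have "(\<Prod>j\<in>{0..<length t}. stepp \<pi> x K t j)
      = (\<Prod>i\<in>{1..n}. \<Prod>j\<in>{j \<in> {0..<length t}. sndr \<pi> t j = i}. stepp \<pi> x K t j)"
    by (rule prod.group[symmetric]) (use snd_in in auto)
  also have "\<dots> = (\<Prod>i\<in>{1..n}. if i \<in> K then aa \<pi> i x t else bb \<pi> i t)"
  proof (rule prod.cong[OF refl])
    fix i assume "i \<in> {1..n}"
    have eqs: "{j \<in> {0..<length t}. sndr \<pi> t j = i} = {j. j < length t \<and> sndr \<pi> t j = i}" by auto
    show "(\<Prod>j\<in>{j \<in> {0..<length t}. sndr \<pi> t j = i}. stepp \<pi> x K t j) = (if i \<in> K then aa \<pi> i x t else bb \<pi> i t)"
      unfolding eqs aa_def bb_def by (cases "i \<in> K") (auto intro!: prod.cong simp: st)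
  qed
  finally show ?thesis .
qed

lemma pmf_run_factor:
  assumes v: "valid_protocol n N \<pi>"
  shows "pmf (run \<pi> N x K []) t = (if okt \<pi> N [] t then (\<Prod>i\<in>{1..n}. if i \<in> K then aa \<pi> i x t else bb \<pi> i t) else 0)"
  using factor[OF v, of t x K] by (simp add: pmf_run)



lemma succ_win_sum:
  fixes \<pi> :: "'m protocol" and h :: real and f :: "'m list \<Rightarrow> nat" and g :: "'m list \<Rightarrow> nat \<Rightarrow> nat"
  assumes v: "valid_protocol n N \<pi>" and ln: "l \<le> n"
  defines "Xs \<equiv> {1..(2::nat) ^ nat \<lceil>h\<rceil>}"
      and "Ks \<equiv> {K. K \<subseteq> {1..n} \<and> card K = l}"
      and "Tset \<equiv> (\<Union>x\<in>{1..(2::nat) ^ nat \<lceil>h\<rceil>}. \<Union>S\<in>Pow {1..n}. set_pmf (run \<pi> N x S []))"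
  shows "succ_win h l n \<pi> N f g = (\<Sum>x\<in>Xs. \<Sum>K\<in>Ks. \<Sum>t\<in>Tset.
            pmf (run \<pi> N x K []) t * (if f t = x \<and> g t (f t) \<notin> K then 1 else 0))
          / (real (card Xs) * real (card Ks))"
proof -
  define E where "E = {(x, K, T). f T = x \<and> g T (f T) \<notin> K}"
  have finXs: "finite Xs" "Xs \<noteq> {}" unfolding Xs_def by simp_all
  have finKs: "finite Ks" unfolding Ks_def by (rule finite_subset[of _ "Pow {1..n}"]) auto
  have KsNE: "Ks \<noteq> {}"
  proof -
    have "{1..l} \<in> Ks" unfolding Ks_def using ln by auto
    then show ?thesis by auto
  qed
  have finT: "finite Tset" unfolding Tset_def
    by (intro finite_UN_I finite_run[OF v]) simp_all
  have subT: "set_pmf (run \<pi> N x K []) \<subseteq> Tset" if "x \<in> Xs" "K \<in> Ks" for x K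
  proof -
    have x: "x \<in> {1..(2::nat) ^ nat \<lceil>h\<rceil>}" using that(1) unfolding Xs_def .
    have K: "K \<in> Pow {1..n}" using that(2) unfolding Ks_def by auto
    have "set_pmf (run \<pi> N x K []) \<subseteq> (\<Union>S\<in>Pow {1..n}. set_pmf (run \<pi> N x S []))"
      using K by (rule UN_upper)
    also have "\<dots> \<subseteq> Tset" unfolding Tset_def using x by (rule UN_upper)
    finally show ?thesis .
  qed
  define Q2 where "Q2 x K = bind_pmf (run \<pi> N x K []) (\<lambda>T. return_pmf (x, K, T))" for x K
  define Q1 where "Q1 x = bind_pmf (pmf_of_set Ks) (Q2 x)" for x
  have game: "succ_game h l n \<pi> N = bind_pmf (pmf_of_set Xs) Q1"
    unfolding succ_game_def Q1_def Q2_def Xs_def Ks_def ..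
  have finQ2: "finite (set_pmf (Q2 x K))" for x K
    unfolding Q2_def by (simp add: finite_run[OF v])
  have finQ1: "finite (set_pmf (Q1 x))" for x
    unfolding Q1_def using finKs KsNE finQ2 by (simp add: set_pmf_of_set)
  have e2: "measure_pmf.prob (Q2 x K) E
        = (\<Sum>t\<in>Tset. pmf (run \<pi> N x K []) t * (if f t = x \<and> g t (f t) \<notin> K then 1 else 0))"
    if "x \<in> Xs" "K \<in> Ks" for x K
  proof -
    have "measure_pmf.prob (Q2 x K) E = measure_pmf.expectation (Q2 x K) (indicator E)" by simp
    also have "\<dots> = (\<Sum>t\<in>Tset. pmf (run \<pi> N x K []) t *\<^sub>R measure_pmf.expectation (return_pmf (x, K, t)) (indicator E))"
      unfolding Q2_def by (rule pmf_expectation_bind[OF finT _ subT[OF that]]) simp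
    also have "\<dots> = (\<Sum>t\<in>Tset. pmf (run \<pi> N x K []) t * (if f t = x \<and> g t (f t) \<notin> K then 1 else 0))"
      by (rule sum.cong[OF refl]) (auto simp: E_def indicator_def)
    finally show ?thesis .
  qed
  have e1: "measure_pmf.prob (Q1 x) E
        = (\<Sum>K\<in>Ks. \<Sum>t\<in>Tset. pmf (run \<pi> N x K []) t * (if f t = x \<and> g t (f t) \<notin> K then 1 else 0)) / real (card Ks)"
    if "x \<in> Xs" for x
  proof -
    have "measure_pmf.prob (Q1 x) E = measure_pmf.expectation (Q1 x) (indicator E)" by simp
    also have "\<dots> = (\<Sum>K\<in>Ks. measure_pmf.expectation (Q2 x K) (indicator E) /\<^sub>R real (card Ks))"
      unfolding Q1_def by (rule pmf_expectation_bind_pmf_of_set[OF KsNE finKs finQ2])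
    also have "\<dots> = (\<Sum>K\<in>Ks. measure_pmf.prob (Q2 x K) E / real (card Ks))"
      by (rule sum.cong[OF refl]) (simp add: divide_inverse mult.commute)
    also have "\<dots> = (\<Sum>K\<in>Ks. (\<Sum>t\<in>Tset. pmf (run \<pi> N x K []) t * (if f t = x \<and> g t (f t) \<notin> K then 1 else 0)) / real (card Ks))"
      by (rule sum.cong[OF refl]) (simp only: e2[OF that])
    also have "\<dots> = (\<Sum>K\<in>Ks. \<Sum>t\<in>Tset. pmf (run \<pi> N x K []) t * (if f t = x \<and> g t (f t) \<notin> K then 1 else 0)) / real (card Ks)"
      by (rule sum_divide_distrib[symmetric])
    finally show ?thesis .
  qed
  have "succ_win h l n \<pi> N f g = measure_pmf.prob (succ_game h l n \<pi> N) E"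
    unfolding succ_win_def E_def ..
  also have "\<dots> = measure_pmf.expectation (succ_game h l n \<pi> N) (indicator E)" by simp
  also have "\<dots> = (\<Sum>x\<in>Xs. measure_pmf.expectation (Q1 x) (indicator E) /\<^sub>R real (card Xs))"
    unfolding game by (rule pmf_expectation_bind_pmf_of_set[OF finXs(2) finXs(1) finQ1])
  also have "\<dots> = (\<Sum>x\<in>Xs. measure_pmf.prob (Q1 x) E / real (card Xs))"
    by (rule sum.cong[OF refl]) (simp add: divide_inverse mult.commute)
  also have "\<dots> = (\<Sum>x\<in>Xs. (\<Sum>K\<in>Ks. \<Sum>t\<in>Tset. pmf (run \<pi> N x K []) t * (if f t = x \<and> g t (f t) \<notin> K then 1 else 0)) / real (card Ks) / real (card Xs))"
    by (rule sum.cong[OF refl]) (simp only: e1)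
  also have "\<dots> = (\<Sum>x\<in>Xs. \<Sum>K\<in>Ks. \<Sum>t\<in>Tset.
            pmf (run \<pi> N x K []) t * (if f t = x \<and> g t (f t) \<notin> K then 1 else 0))
          / (real (card Xs) * real (card Ks))"
    by (simp only: sum_divide_distrib[symmetric] divide_divide_eq_left mult.commute)
  finally show ?thesis .
qed

definition geve :: "'m protocol \<Rightarrow> nat \<Rightarrow> 'm list \<Rightarrow> nat \<Rightarrow> nat" where
  "geve \<pi> n t y = (if \<exists>i\<in>{1..n}. bb \<pi> i t = 0 then (SOME i. i \<in> {1..n} \<and> bb \<pi> i t = 0)
     else (SOME i. i \<in> {1..n} \<and> (\<forall>j\<in>{1..n}. aa \<pi> j y t / bb \<pi> j t \<le> aa \<pi> i y t / bb \<pi> i t)))"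

lemma geve_props:
  assumes n: "1 \<le> n"
  shows "geve \<pi> n t y \<in> {1..n}"
    and "(\<exists>i\<in>{1..n}. bb \<pi> i t = 0) \<Longrightarrow> bb \<pi> (geve \<pi> n t y) t = 0"
    and "(\<forall>i\<in>{1..n}. 0 < bb \<pi> i t) \<Longrightarrow> (\<forall>j\<in>{1..n}. aa \<pi> j y t / bb \<pi> j t \<le> aa \<pi> (geve \<pi> n t y) y t / bb \<pi> (geve \<pi> n t y) t)"
proof -
  define \<phi> where "\<phi> j = aa \<pi> j y t / bb \<pi> j t" for j
  have ne: "{1..n} \<noteq> {}" using n by simp
  obtain i0 where i0: "i0 \<in> {1..n}" "\<forall>j\<in>{1..n}. \<phi> j \<le> \<phi> i0"
  proof -
    have "Max (\<phi> ` {1..n}) \<in> \<phi> ` {1..n}" using ne by (intro Max_in) auto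
    then obtain i where "i \<in> {1..n}" "\<phi> i = Max (\<phi> ` {1..n})" by auto
    moreover have "\<forall>j\<in>{1..n}. \<phi> j \<le> Max (\<phi> ` {1..n})" by auto
    ultimately show ?thesis using that by metis
  qed
  have ex2: "\<exists>i. i \<in> {1..n} \<and> (\<forall>j\<in>{1..n}. aa \<pi> j y t / bb \<pi> j t \<le> aa \<pi> i y t / bb \<pi> i t)"
    using i0 unfolding \<phi>_def by blast
  show "geve \<pi> n t y \<in> {1..n}"
  proof (cases "\<exists>i\<in>{1..n}. bb \<pi> i t = 0")
    case True
    then have "\<exists>i. i \<in> {1..n} \<and> bb \<pi> i t = 0" by blast
    from someI_ex[OF this] True show ?thesis unfolding geve_def by simp
  next
    case False
    from someI_ex[OF ex2] False show ?thesis unfolding geve_def by simp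
  qed
  show "bb \<pi> (geve \<pi> n t y) t = 0" if "\<exists>i\<in>{1..n}. bb \<pi> i t = 0"
  proof -
    have "\<exists>i. i \<in> {1..n} \<and> bb \<pi> i t = 0" using that by blast
    from someI_ex[OF this] that show ?thesis unfolding geve_def by simp
  qed
  show "\<forall>j\<in>{1..n}. aa \<pi> j y t / bb \<pi> j t \<le> aa \<pi> (geve \<pi> n t y) y t / bb \<pi> (geve \<pi> n t y) t"
    if "\<forall>i\<in>{1..n}. 0 < bb \<pi> i t"
  proof -
    have F: "\<not> (\<exists>i\<in>{1..n}. bb \<pi> i t = 0)" using that by force
    from someI_ex[OF ex2] F show ?thesis unfolding geve_def by simp
  qed
qed

lemma pointwise_W:
  fixes \<pi> :: "'m protocol"
  assumes v: "valid_protocol n N \<pi>" and l: "1 \<le> l" "l < n"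
  shows "((\<Sum>K\<in>{K. K \<subseteq> {1..n} \<and> card K = l}. if geve \<pi> n t x \<notin> K then pmf (run \<pi> N x K []) t else 0)
            / real (n choose l)) ^ Suc l
      \<le> ((\<Sum>K\<in>{K. K \<subseteq> {1..n} \<and> card K = Suc l}. pmf (run \<pi> N x K []) t) / real (n choose Suc l)) ^ l
         * pmf (run \<pi> N x' {} []) t"
proof (cases "okt \<pi> N [] t")
  case False
  then have z: "\<And>K y. pmf (run \<pi> N y K []) t = 0" by (simp add: pmf_run_factor[OF v])
  have W0: "(\<Sum>K\<in>{K. K \<subseteq> {1..n} \<and> card K = l}. if geve \<pi> n t x \<notin> K then pmf (run \<pi> N x K []) t else 0) = 0"
    by (rule sum.neutral) (simp add: z)
  have "0 \<le> ((\<Sum>K\<in>{K. K \<subseteq> {1..n} \<and> card K = Suc l}. pmf (run \<pi> N x K []) t) / real (n choose Suc l)) ^ l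
         * pmf (run \<pi> N x' {} []) t" by (simp add: z)
  then show ?thesis unfolding W0 by simp
next
  case True
  let ?I = "{1..n::nat}"
  let ?g = "geve \<pi> n t x"
  have P: "\<And>K y. pmf (run \<pi> N y K []) t = (\<Prod>i\<in>?I. if i \<in> K then aa \<pi> i y t else bb \<pi> i t)"
    using True by (simp add: pmf_run_factor[OF v])
  have n1: "1 \<le> n" using l by simp
  have W: "(\<Sum>K\<in>{K. K \<subseteq> ?I \<and> card K = l}. if ?g \<notin> K then pmf (run \<pi> N x K []) t else 0)
      = (\<Sum>K\<in>{K. K \<subseteq> ?I \<and> card K = l \<and> ?g \<notin> K}. \<Prod>i\<in>?I. if i \<in> K then aa \<pi> i x t else bb \<pi> i t)"
  proof -
    have "(\<Sum>K\<in>{K. K \<subseteq> ?I \<and> card K = l}. if ?g \<notin> K then pmf (run \<pi> N x K []) t else 0)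
        = (\<Sum>K\<in>{K \<in> {K. K \<subseteq> ?I \<and> card K = l}. ?g \<notin> K}. pmf (run \<pi> N x K []) t)"
      by (rule sum.inter_filter[symmetric]) auto
    also have "{K \<in> {K. K \<subseteq> ?I \<and> card K = l}. ?g \<notin> K} = {K. K \<subseteq> ?I \<and> card K = l \<and> ?g \<notin> K}" by auto
    finally show ?thesis by (simp add: P)
  qed
  have D: "(\<Sum>K\<in>{K. K \<subseteq> ?I \<and> card K = Suc l}. pmf (run \<pi> N x K []) t)
      = (\<Sum>K\<in>{K. K \<subseteq> ?I \<and> card K = Suc l}. \<Prod>i\<in>?I. if i \<in> K then aa \<pi> i x t else bb \<pi> i t)"
    by (simp add: P)
  have Z: "pmf (run \<pi> N x' {} []) t = (\<Prod>i\<in>?I. if i \<in> {} then aa \<pi> i x t else bb \<pi> i t)"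
    by (simp add: P)
  show ?thesis unfolding W D Z
  proof (rule pointwise_AB)
    show "finite ?I" by simp
    show "card ?I = n" by simp
    show "1 \<le> l" "l < n" using l by auto
    show "\<And>i. i \<in> ?I \<Longrightarrow> 0 \<le> aa \<pi> i x t" by (rule aa_nonneg)
    show "\<And>i. i \<in> ?I \<Longrightarrow> 0 \<le> bb \<pi> i t" by (rule bb_nonneg)
    show "?g \<in> ?I" by (rule geve_props(1)[OF n1])
    show "(\<exists>i\<in>?I. bb \<pi> i t = 0) \<Longrightarrow> bb \<pi> ?g t = 0" by (rule geve_props(2)[OF n1])
    show "(\<forall>i\<in>?I. 0 < bb \<pi> i t) \<Longrightarrow> (\<forall>j\<in>?I. aa \<pi> j x t / bb \<pi> j t \<le> aa \<pi> ?g x t / bb \<pi> ?g t)"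
      by (rule geve_props(3)[OF n1])
  qed
qed

lemma lin_helper: "(0::real) < s \<Longrightarrow> 0 < q \<Longrightarrow> a * (b * (d / q) + z) / s = (a * b / (s * q)) * d + (a / s) * z"
  by (simp add: field_simps)

lemma lin_helper2:
  assumes "(0::real) < s" "0 < q" "s = b + 1" shows "a * b / (s * q) * q + a / s = a"
proof -
  have "a * b / (s * q) * q = a * b / s" using assms by simp
  then have "a * b / (s * q) * q + a / s = (a * b + a) / s" by (simp add: add_divide_distrib)
  also have "a * b + a = a * s" using assms(3) by (simp add: algebra_simps)
  finally show ?thesis using assms(1) by simp
qed

lemma win_bound:
  fixes \<pi> :: "'m protocol" and h :: real and f :: "'m list \<Rightarrow> nat"
  assumes v: "valid_protocol n N \<pi>" and l1: "1 \<le> l" and ln: "l < n"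
  shows "succ_win h l n \<pi> N f (geve \<pi> n) \<le> real ((2::nat) ^ nat \<lceil>h\<rceil>) powr (- 1 / real (Suc l))"
proof -
  define M where "M = real ((2::nat) ^ nat \<lceil>h\<rceil>)"
  define Xs where "Xs = {1..(2::nat) ^ nat \<lceil>h\<rceil>}"
  define Ks where "Ks = {K. K \<subseteq> {1..n} \<and> card K = l}"
  define Ks1 where "Ks1 = {K. K \<subseteq> {1..n} \<and> card K = Suc l}"
  define Tset where "Tset = (\<Union>x\<in>{1..(2::nat) ^ nat \<lceil>h\<rceil>}. \<Union>S\<in>Pow {1..n}. set_pmf (run \<pi> N x S []))"
  define P where "P K x t = pmf (run \<pi> N x K []) t" for K x t
  define g where "g = geve \<pi> n"
  define W where "W x t = (\<Sum>K\<in>Ks. if g t x \<notin> K then P K x t else 0)" for x t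
  define D where "D x t = (\<Sum>K\<in>Ks1. P K x t)" for x t
  define Z where "Z t = P {} 1 t" for t
  define C where "C = real (n choose l)"
  define C' where "C' = real (n choose Suc l)"
  define Mt where "Mt = M powr (real l / real (Suc l))"
  have M0: "0 < M" unfolding M_def by simp
  have Mt0: "0 < Mt" unfolding Mt_def using M0 by simp
  have C0: "0 < C" unfolding C_def using ln by simp
  have C'0: "0 < C'" unfolding C'_def using ln by simp
  have P0: "0 \<le> P K x t" for K x t unfolding P_def by simp
  have finXs: "finite Xs" unfolding Xs_def by simp
  have cXs: "real (card Xs) = M" unfolding Xs_def M_def by simp
  have cKs: "card Ks = n choose l" unfolding Ks_def using n_subsets[of "{1..n}" l] by simp
  have cKs1: "card Ks1 = n choose Suc l" unfolding Ks1_def using n_subsets[of "{1..n}" "Suc l"] by simp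
  have finKs: "finite Ks" "finite Ks1" unfolding Ks_def Ks1_def
    by (rule finite_subset[of _ "Pow {1..n}"], auto)+
  have finT: "finite Tset" unfolding Tset_def
    by (intro finite_UN_I finite_run[OF v]) simp_all
  have subT: "set_pmf (run \<pi> N x K []) \<subseteq> Tset" if "x \<in> Xs" "K \<in> Pow {1..n}" for x K
  proof -
    have x: "x \<in> {1..(2::nat) ^ nat \<lceil>h\<rceil>}" using that(1) unfolding Xs_def .
    have "set_pmf (run \<pi> N x K []) \<subseteq> (\<Union>S\<in>Pow {1..n}. set_pmf (run \<pi> N x S []))"
      using that(2) by (rule UN_upper)
    also have "\<dots> \<subseteq> Tset" unfolding Tset_def using x by (rule UN_upper)
    finally show ?thesis .
  qed
  have sum1: "(\<Sum>t\<in>Tset. P K x t) = 1" if "x \<in> Xs" "K \<in> Pow {1..n}" for x K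
    unfolding P_def by (rule sum_pmf_eq_1[OF finT subT[OF that]])
  have win: "succ_win h l n \<pi> N f g = (\<Sum>x\<in>Xs. \<Sum>K\<in>Ks. \<Sum>t\<in>Tset. P K x t * (if f t = x \<and> g t (f t) \<notin> K then 1 else 0)) / (M * C)"
  proof -
    have win0: "succ_win h l n \<pi> N f g = (\<Sum>x\<in>Xs. \<Sum>K\<in>Ks. \<Sum>t\<in>Tset. P K x t * (if f t = x \<and> g t (f t) \<notin> K then 1 else 0)) / (real (card Xs) * real (card Ks))"
      unfolding Xs_def Ks_def Tset_def P_def by (rule succ_win_sum[OF v]) (use ln in simp)
    have cK: "real (card Ks) = C" unfolding C_def cKs ..
    show ?thesis unfolding win0 cK cXs ..
  qed
  have swap: "(\<Sum>x\<in>Xs. \<Sum>K\<in>Ks. \<Sum>t\<in>Tset. P K x t * (if f t = x \<and> g t (f t) \<notin> K then 1 else 0))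
      = (\<Sum>t\<in>Tset. \<Sum>x\<in>Xs. if f t = x then W x t else 0)"
  proof -
    have "(\<Sum>x\<in>Xs. \<Sum>K\<in>Ks. \<Sum>t\<in>Tset. P K x t * (if f t = x \<and> g t (f t) \<notin> K then 1 else 0))
        = (\<Sum>x\<in>Xs. \<Sum>t\<in>Tset. \<Sum>K\<in>Ks. P K x t * (if f t = x \<and> g t (f t) \<notin> K then 1 else 0))"
      by (rule sum.cong[OF refl]) (rule sum.swap)
    also have "\<dots> = (\<Sum>t\<in>Tset. \<Sum>x\<in>Xs. \<Sum>K\<in>Ks. P K x t * (if f t = x \<and> g t (f t) \<notin> K then 1 else 0))"
      by (rule sum.swap)
    also have "\<dots> = (\<Sum>t\<in>Tset. \<Sum>x\<in>Xs. if f t = x then W x t else 0)"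
    proof (intro sum.cong refl)
      fix t x
      show "(\<Sum>K\<in>Ks. P K x t * (if f t = x \<and> g t (f t) \<notin> K then 1 else 0)) = (if f t = x then W x t else 0)"
        unfolding W_def by (cases "f t = x") (auto intro!: sum.cong)
    qed
    finally show ?thesis .
  qed
  have pt: "W x t / C \<le> Mt * (real l * (D x t / (C' * M)) + Z t) / real (Suc l)" for x t
  proof -
    have base: "(W x t / C) ^ Suc l \<le> (D x t / C') ^ l * Z t"
      using pointwise_W[OF v l1 ln, of t x 1] unfolding W_def D_def Z_def P_def Ks_def Ks1_def C_def C'_def g_def .
    have W0: "0 \<le> W x t" unfolding W_def using P0 by (intro sum_nonneg) auto
    have D0: "0 \<le> D x t" unfolding D_def using P0 by (intro sum_nonneg) auto
    have Z0: "0 \<le> Z t" unfolding Z_def using P0 by simp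
    have Mtp: "Mt ^ Suc l = M ^ l"
    proof -
      have "Mt ^ Suc l = M powr (real (Suc l) * (real l / real (Suc l)))"
        unfolding Mt_def using M0 by (intro powr_power) simp
      also have "\<dots> = M powr (real l)" by simp
      also have "\<dots> = M ^ l" using M0 by (rule powr_realpow)
      finally show ?thesis .
    qed
    define w where "w = W x t / C / Mt"
    define u where "u = D x t / (C' * M)"
    have w0: "0 \<le> w" unfolding w_def using W0 C0 Mt0 by simp
    have u0: "0 \<le> u" unfolding u_def using D0 C'0 M0 by simp
    have "w ^ Suc l = (W x t / C) ^ Suc l / M ^ l" unfolding w_def Mtp[symmetric] by (simp add: power_divide power_mult_distrib)
    also have "\<dots> \<le> (D x t / C') ^ l * Z t / M ^ l" using base M0 by (intro divide_right_mono) auto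
    also have "\<dots> = u ^ l * Z t" unfolding u_def by (simp add: power_divide power_mult_distrib)
    finally have "w ^ Suc l \<le> u ^ l * Z t" .
    then have "w \<le> (real l * u + Z t) / real (Suc l)" by (rule amgm[OF u0 Z0 w0 l1])
    then have "Mt * w \<le> Mt * ((real l * u + Z t) / real (Suc l))" using Mt0 by (intro mult_left_mono) auto
    moreover have "Mt * w = W x t / C" unfolding w_def using Mt0 by simp
    ultimately show ?thesis unfolding u_def by simp
  qed
  define \<alpha> where "\<alpha> = Mt * real l / (real (Suc l) * (C' * M))"
  define \<beta> where "\<beta> = Mt / real (Suc l)"
  have \<alpha>0: "0 \<le> \<alpha>" unfolding \<alpha>_def using Mt0 C'0 M0 by simp
  have \<beta>0: "0 \<le> \<beta>" unfolding \<beta>_def using Mt0 by simp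
  have ptab: "W x t / C \<le> \<alpha> * D x t + \<beta> * Z t" for x t
  proof -
    have "W x t / C \<le> Mt * (real l * (D x t / (C' * M)) + Z t) / real (Suc l)" by (rule pt)
    also have "\<dots> = \<alpha> * D x t + \<beta> * Z t" unfolding \<alpha>_def \<beta>_def using C'0 M0 by (intro lin_helper) auto
    finally show ?thesis .
  qed
  have inner: "(\<Sum>x\<in>Xs. if f t = x then W x t / C else 0) \<le> \<alpha> * (\<Sum>x\<in>Xs. D x t) + \<beta> * Z t" for t
  proof -
    have "(\<Sum>x\<in>Xs. if f t = x then W x t / C else 0) \<le> (\<Sum>x\<in>Xs. (if f t = x then \<alpha> * D x t + \<beta> * Z t else 0))"
      by (intro sum_mono) (use ptab in auto)
    also have "\<dots> = (\<Sum>x\<in>Xs. (if f t = x then \<alpha> * D x t else 0)) + (\<Sum>x\<in>Xs. (if f t = x then \<beta> * Z t else 0))"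
      by (subst sum.distrib[symmetric]) (rule sum.cong, auto)
    also have "(\<Sum>x\<in>Xs. (if f t = x then \<alpha> * D x t else 0)) \<le> (\<Sum>x\<in>Xs. \<alpha> * D x t)"
      by (intro sum_mono) (use \<alpha>0 D_def P0 in \<open>auto intro!: mult_nonneg_nonneg sum_nonneg\<close>)
    also have "(\<Sum>x\<in>Xs. (if f t = x then \<beta> * Z t else 0)) = (if f t \<in> Xs then \<beta> * Z t else 0)"
      using finXs by (simp add: sum.delta)
    also have "\<dots> \<le> \<beta> * Z t" using \<beta>0 Z_def P0 by simp
    finally show ?thesis by (simp add: sum_distrib_left)
  qed
  have sumD: "(\<Sum>t\<in>Tset. \<Sum>x\<in>Xs. D x t) = C' * M"
  proof -
    have "(\<Sum>t\<in>Tset. \<Sum>x\<in>Xs. D x t) = (\<Sum>x\<in>Xs. \<Sum>K\<in>Ks1. \<Sum>t\<in>Tset. P K x t)"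
      unfolding D_def by (subst sum.swap) (rule sum.cong[OF refl], rule sum.swap)
    also have "\<dots> = (\<Sum>x\<in>Xs. \<Sum>K\<in>Ks1. 1)"
      by (intro sum.cong refl sum1) (auto simp: Ks1_def)
    also have "\<dots> = C' * M" using cXs cKs1 by (simp add: C'_def)
    finally show ?thesis .
  qed
  have sumZ: "(\<Sum>t\<in>Tset. Z t) = 1"
    unfolding Z_def by (rule sum1) (auto simp: Xs_def)
  have "(\<Sum>t\<in>Tset. \<Sum>x\<in>Xs. if f t = x then W x t else 0) / C = (\<Sum>t\<in>Tset. \<Sum>x\<in>Xs. if f t = x then W x t / C else 0)"
    unfolding sum_divide_distrib by (intro sum.cong refl) auto
  also have "\<dots> \<le> (\<Sum>t\<in>Tset. \<alpha> * (\<Sum>x\<in>Xs. D x t) + \<beta> * Z t)" by (intro sum_mono inner)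
  also have "\<dots> = \<alpha> * (C' * M) + \<beta>"
    by (simp add: sum.distrib sum_distrib_left[symmetric] sumD sumZ)
  also have "\<dots> = Mt" unfolding \<alpha>_def \<beta>_def using C'0 M0 by (intro lin_helper2) auto
  finally have S: "(\<Sum>t\<in>Tset. \<Sum>x\<in>Xs. if f t = x then W x t else 0) / C \<le> Mt" .
  have "succ_win h l n \<pi> N f (geve \<pi> n) = ((\<Sum>t\<in>Tset. \<Sum>x\<in>Xs. if f t = x then W x t else 0) / C) / M"
    using win swap unfolding g_def by (simp add: divide_divide_eq_left mult.commute)
  also have "\<dots> \<le> Mt / M" using S M0 by (intro divide_right_mono) auto
  also have "\<dots> = M powr (- 1 / real (Suc l))"
  proof -
    have "Mt / M = M powr (real l / real (Suc l) - 1)" unfolding Mt_def using M0 by (simp add: powr_diff)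
    also have "real l / real (Suc l) - 1 = - 1 / real (Suc l)" by (simp add: field_simps)
    finally show ?thesis .
  qed
  finally show ?thesis unfolding M_def .
qed


theorem lemma5p9:
  fixes c h :: real and l n N :: nat and \<pi> :: "'m protocol"
  assumes "0 < c" and "c < 1" and "0 < h"
    and "1 \<le> l" and "l < n"
    and "valid_protocol n N \<pi>"
  shows "Succ h l n \<pi> N \<le>
    1 - (c * h + real l * log 2 (1 - c) + real l * c * log 2 (exp 1) - c) / h"
proof -
  note v = assms(6)
  define B where "B = (2::real) powr (- h / real (Suc l))"
  have n1: "1 \<le> n" using assms by simp
  have MB: "real ((2::nat) ^ nat \<lceil>h\<rceil>) powr (- 1 / real (Suc l)) \<le> B"
  proof -
    have "(2::real) powr h \<le> 2 powr real (nat \<lceil>h\<rceil>)"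
      by (intro powr_mono) (auto simp: real_nat_ceiling_ge)
    also have "\<dots> = real ((2::nat) ^ nat \<lceil>h\<rceil>)" by (simp add: powr_realpow)
    finally have le: "(2::real) powr h \<le> real ((2::nat) ^ nat \<lceil>h\<rceil>)" .
    have "real ((2::nat) ^ nat \<lceil>h\<rceil>) powr (- 1 / real (Suc l)) \<le> (2 powr h) powr (- 1 / real (Suc l))"
      by (rule powr_mono2') (use le in auto)
    also have "\<dots> = B" unfolding B_def by (simp add: powr_powr)
    finally show ?thesis .
  qed
  have each: "(INF g\<in>{g. \<forall>T y. g T y \<in> {1..n}}. succ_win h l n \<pi> N f g) \<le> B" for f
  proof -
    have gin: "geve \<pi> n \<in> {g. \<forall>T y. g T y \<in> {1..n}}" using geve_props(1)[OF n1] by blast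
    have bdd: "bdd_below ((\<lambda>g. succ_win h l n \<pi> N f g) ` {g. \<forall>T y. g T y \<in> {1..n}})"
      by (rule bdd_belowI[of _ 0]) (auto simp: succ_win_def)
    have "(INF g\<in>{g. \<forall>T y. g T y \<in> {1..n}}. succ_win h l n \<pi> N f g) \<le> succ_win h l n \<pi> N f (geve \<pi> n)"
      by (rule cINF_lower[OF bdd gin])
    also have "\<dots> \<le> real ((2::nat) ^ nat \<lceil>h\<rceil>) powr (- 1 / real (Suc l))"
      by (rule win_bound[OF v assms(4) assms(5)])
    also have "\<dots> \<le> B" by (rule MB)
    finally show ?thesis .
  qed
  have "Succ h l n \<pi> N \<le> B"
    unfolding Succ_def
    apply (rule cSUP_least)
     apply simp
    apply (rule each)
    done
  also have "B \<le> 1 - (c * h + real l * log 2 (1 - c) + real l * c * log 2 (exp 1) - c) / h"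
    unfolding B_def by (rule analytic) (use assms in auto)
  finally show ?thesis .
qed

end
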